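(* Let $G$ be a maximal outerplanar graph of order $n\geq 3$. Then $\gamma_{\times 2}(G)\leq \lfloor \frac{2n}{3}\rfloor$. *)

theory Defs
  imports Main
begin

definition simple_graph :: "'a set \<Rightarrow> 'a set set \<Rightarrow> bool" where
  "simple_graph V E \<longleftrightarrow> finite V \<and> (\<forall>e\<in>E. e \<subseteq> V \<and> card e = 2)"

text \<open>Outerplanar: the vertices can be placed on a circle (in the cyclic order given by
  a bijection onto 0..n-1) such that no two edges, drawn as chords, cross.
  Chords {a,b} and {c,d} cross iff their endpoints interleave.\<close>
definition outerplanar :: "'a set \<Rightarrow> 'a set set \<Rightarrow> bool" where
  "outerplanar V E \<longleftrightarrow>
     (\<exists>f. bij_betw f V {0..<card V} \<and>
          (\<forall>a b c d. {a, b} \<in> E \<longrightarrow> {c, d} \<in> E \<longrightarrow>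
               \<not> (f a < f c \<and> f c < f b \<and> f b < f d)))"

definition maximal_outerplanar :: "'a set \<Rightarrow> 'a set set \<Rightarrow> bool" where
  "maximal_outerplanar V E \<longleftrightarrow>
     simple_graph V E \<and> outerplanar V E \<and>
     (\<forall>u\<in>V. \<forall>v\<in>V. u \<noteq> v \<longrightarrow> {u, v} \<notin> E \<longrightarrow> \<not> outerplanar V (insert {u, v} E))"

definition closed_nbhd :: "'a set set \<Rightarrow> 'a \<Rightarrow> 'a set" where
  "closed_nbhd E v = insert v {u. {u, v} \<in> E}"

definition double_dominating :: "'a set \<Rightarrow> 'a set set \<Rightarrow> 'a set \<Rightarrow> bool" where
  "double_dominating V E D \<longleftrightarrow> D \<subseteq> V \<and> (\<forall>v\<in>V. card (closed_nbhd E v \<inter> D) \<ge> 2)"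

definition double_domination_number :: "'a set \<Rightarrow> 'a set set \<Rightarrow> nat" where
  "double_domination_number V E = Min {card D | D. double_dominating V E D}"

end

theory Submission
  imports Defs "HOL-Number_Theory.Cong"
begin

locale tri = fixes n :: nat and P :: "nat \<Rightarrow> nat \<Rightarrow> bool"
  assumes symP: "P i j \<Longrightarrow> P j i"
  and nc: "\<lbrakk>i<j; j<k; k<l; l<n; P i k; P j l\<rbrakk> \<Longrightarrow> False"
  and mx: "\<lbrakk>i<j; j<n; \<not>P i j\<rbrakk> \<Longrightarrow> \<exists>c d. d<n \<and> P c d \<and> i<c \<and> c<j \<and> (d<i \<or> j<d)"
begin

lemma side: "i+1<n \<Longrightarrow> P i (i+1)"
  by (rule ccontr) (use mx[of i "i+1"] in auto)

lemma wrap: "2 \<le> n \<Longrightarrow> P 0 (n-1)"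
  by (rule ccontr) (use mx[of 0 "n-1"] in auto)

lemma cyc: "2 \<le> n \<Longrightarrow> P (x mod n) ((x+1) mod n)"
proof -
  assume n: "2 \<le> n"
  have e: "(x+1) mod n = (x mod n + 1) mod n" by (simp add: mod_Suc_eq)
  show ?thesis
  proof (cases "x mod n + 1 < n")
    case True thus ?thesis using side e by simp
  next
    case False
    have "x mod n < n" using n by simp
    then have xm: "x mod n = n-1" using False by linarith
    then have "(x+1) mod n = 0" using e n by simp
    then show ?thesis using wrap[OF n] symP xm by simp
  qed
qed

lemma ear_aux: "\<forall>a b. a+2 \<le> b \<and> b<n \<and> P a b \<and> \<not>(a=0 \<and> b=n-1) \<and> b-a = m \<longrightarrow> (\<exists>e. e+2<n \<and> P e (e+2))"
proof (induction m rule: less_induct)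
  case (less m)
  show ?case
  proof (intro allI impI)
    fix a b assume H: "a+2 \<le> b \<and> b<n \<and> P a b \<and> \<not>(a=0 \<and> b=n-1) \<and> b-a = m"
    show "\<exists>e. e+2<n \<and> P e (e+2)"
    proof (cases "b = a+2")
      case True thus ?thesis using H by auto
    next
      case False
      show ?thesis
      proof (cases "P (a+1) b")
        case True
        have lt: "b-(a+1) < m" using H False by auto
        have "(a+1)+2 \<le> b \<and> b<n \<and> P (a+1) b \<and> \<not>(a+1=0 \<and> b=n-1) \<and> b-(a+1) = b-(a+1)"
          using H False True by auto
        then show ?thesis using less.IH[OF lt] by blast
      next
        case F2: False
        from mx[of "a+1" b] H False F2 obtain c d where cd: "d<n" "P c d" "a+1<c" "c<b" "d<a+1 \<or> b<d" by auto
        show ?thesis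
        proof (cases "d = a")
          case True
          then have "P a c" using cd symP by auto
          have lt: "c-a < m" using H cd by auto
          have "a+2 \<le> c \<and> c<n \<and> P a c \<and> \<not>(a=0 \<and> c=n-1) \<and> c-a = c-a"
            using H cd \<open>P a c\<close> by auto
          then show ?thesis using less.IH[OF lt] by blast
        next
          case False
          then have "d<a \<or> b<d" using cd by auto
          then have False
          proof
            assume "d<a" thus False using nc[of d a c b] cd H symP by auto
          next
            assume "b<d" thus False using nc[of a c b d] cd H by auto
          qed
          thus ?thesis ..
        qed
      qed
    qed
  qed
qed

lemma ear: "4 \<le> n \<Longrightarrow> \<exists>e. e+2<n \<and> P e (e+2)"
proof -
  assume n: "4 \<le> n"
  show ?thesis
  proof (cases "P 0 2")
    case True
    show ?thesis
    proof (rule exI[of _ 0])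
      show "0+2<n \<and> P 0 (0+2)" using True n by (simp add: numeral_2_eq_2)
    qed
  next
    case False
    from mx[of 0 2] False n obtain c d where cd: "d<n" "P c d" "0<c" "c<2" "d<0 \<or> 2<d" by auto
    then have "c = 1" by auto
    have "1+2 \<le> d \<and> d<n \<and> P 1 d \<and> \<not>(1=(0::nat) \<and> d=n-1) \<and> d-1 = d-1"
      using cd \<open>c = 1\<close> by auto
    then show ?thesis using ear_aux[of "d-1"] by blast
  qed
qed
end

lemma a1: "3*q+1 < (n::nat) \<Longrightarrow> q < (n+1) div 3" by presburger
lemma a2: "3*q < (n::nat) \<Longrightarrow> 1 \<le> q \<Longrightarrow> q - 1 < n div 3" by presburger
lemma a3: "(i::nat) mod 3 = 0 \<Longrightarrow> 1 \<le> i \<Longrightarrow> i = 3*(i div 3 - 1) + 3 \<and> 1 \<le> i div 3" by presburger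

lemma predI: "(x::nat) \<noteq> 0 \<Longrightarrow> (\<And>p. x = p + 1 \<Longrightarrow> p \<in> S) \<Longrightarrow> x - 1 \<in> S"
  by (cases x) auto

lemma dd_comb:
  fixes Q :: "nat \<Rightarrow> nat \<Rightarrow> bool"
  assumes n3: "3 \<le> n" and sym: "\<And>i j. Q i j \<Longrightarrow> Q j i"
    and nx: "\<And>i. i+1<n \<Longrightarrow> Q i (i+1)" and wr: "Q (n-1) 0"
    and ea: "n mod 3 \<noteq> 0 \<Longrightarrow> Q (n-1) 1"
  shows "\<exists>S \<subseteq> {..<n}. card S \<le> 2*n div 3 \<and>
          (\<forall>i<n. \<exists>j k. j\<noteq>k \<and> j\<in>S \<and> k\<in>S \<and> (j=i \<or> Q i j) \<and> (k=i \<or> Q i k))"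
proof (cases "n mod 3 = 0")
  case True
  define S where "S = {i. i<n \<and> i mod 3 \<noteq> 0}"
  have sub: "S \<subseteq> (\<lambda>j. 3*j+1) ` {..<n div 3} \<union> (\<lambda>j. 3*j+2) ` {..<n div 3}"
  proof
    fix i assume "i \<in> S"
    then have "i<n" "i mod 3 \<noteq> 0" by (auto simp: S_def)
    then have "(i = 3*(i div 3)+1 \<and> i div 3 < n div 3) \<or> (i = 3*(i div 3)+2 \<and> i div 3 < n div 3)"
      using True by presburger
    then show "i \<in> (\<lambda>j. 3*j+1) ` {..<n div 3} \<union> (\<lambda>j. 3*j+2) ` {..<n div 3}" by blast
  qed
  have "card S \<le> card ((\<lambda>j. 3*j+1) ` {..<n div 3} \<union> (\<lambda>j. 3*j+2) ` {..<n div 3})"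
    by (rule card_mono[OF _ sub]) auto
  also have "\<dots> \<le> card ((\<lambda>j. 3*j+1) ` {..<n div 3}) + card ((\<lambda>j. 3*j+2) ` {..<n div 3})"
    by (rule card_Un_le)
  also have "\<dots> \<le> n div 3 + n div 3"
    using card_image_le[of "{..<n div 3}"] by (metis add_mono card_lessThan finite_lessThan)
  also have "\<dots> = 2*n div 3" using True by presburger
  finally have cS: "card S \<le> 2*n div 3" .
  have dom: "\<exists>j k. j\<noteq>k \<and> j\<in>S \<and> k\<in>S \<and> (j=i \<or> Q i j) \<and> (k=i \<or> Q i k)" if i: "i<n" for i
  proof -
    have "i mod 3 = 0 \<or> i mod 3 = 1 \<or> i mod 3 = 2" by presburger
    then consider "i mod 3 = 0" | "i mod 3 = 1" | "i mod 3 = 2" by auto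
    then show ?thesis
    proof cases
      case 1
      have a: "i+1 < n" using i 1 True by presburger
      have b: "i+1 \<in> S" unfolding S_def mem_Collect_eq using a 1 by (presburger+)
      show ?thesis
      proof (cases "i = 0")
        case True
        have "n-1 \<in> S" proof (rule predI)
          show "n \<noteq> 0" using n3 by auto
        next
          fix p assume "n = p + 1" then show "p \<in> S" unfolding S_def mem_Collect_eq using n3 \<open>n mod 3 = 0\<close> by presburger
        qed
        moreover have "Q i (n-1)" using wr sym True by auto
        moreover have "Q i (i+1)" using nx a by auto
        ultimately show ?thesis using b n3 True by (intro exI[of _ "i+1"] exI[of _ "n-1"]) auto
      next
        case False
        have "i-1 \<in> S" proof (rule predI)
          show "i \<noteq> 0" using False by auto
        next
          fix p assume "i = p + 1" then show "p \<in> S" unfolding S_def mem_Collect_eq using 1 i by presburger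
        qed
        moreover have "Q i (i-1)" using nx[of "i-1"] sym False i by auto
        moreover have "Q i (i+1)" using nx a by auto
        ultimately show ?thesis using b by (intro exI[of _ "i+1"] exI[of _ "i-1"]) auto
      qed
    next
      case 2
      have a: "i+1 < n" using i 2 True by presburger
      have b: "i+1 \<in> S" "i \<in> S" unfolding S_def mem_Collect_eq using a 2 i by (presburger+)
      show ?thesis using b nx[OF a] by (intro exI[of _ "i+1"] exI[of _ i]) auto
    next
      case 3
      have b3: "i \<noteq> 0" using 3 by auto
      have b2: "i \<in> S" unfolding S_def mem_Collect_eq using 3 i by presburger
      have b1: "i-1 \<in> S" proof (rule predI)
          show "i \<noteq> 0" using b3 by auto
        next
          fix p assume "i = p + 1" then show "p \<in> S" unfolding S_def mem_Collect_eq using 3 i by presburger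
        qed
      note b = b1 b2 b3
      have "Q i (i-1)" using nx[of "i-1"] sym b i by auto
      then show ?thesis using b by (intro exI[of _ "i-1"] exI[of _ i]) auto
    qed
  qed
  show ?thesis using cS dom by (intro exI[of _ S]) (auto simp: S_def)
next
  case False
  have n4: "4 \<le> n" using n3 False by presburger
  have ear: "Q (n-1) 1" using ea False by auto
  define S where "S = {i. 1 \<le> i \<and> i<n \<and> i mod 3 \<noteq> 2}"
  have sub: "S \<subseteq> (\<lambda>j. 3*j+1) ` {..<(n+1) div 3} \<union> (\<lambda>j. 3*j+3) ` {..<n div 3}"
  proof
    fix i assume "i \<in> S"
    then have "1 \<le> i" "i<n" "i mod 3 \<noteq> 2" by (auto simp: S_def)
    have "(i = 3*(i div 3)+1 \<and> i div 3 < (n+1) div 3) \<or> (i = 3*(i div 3 - 1)+3 \<and> i div 3 - 1 < n div 3)"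
    proof (cases "i mod 3 = 1")
      case True
      have e: "i = 3*(i div 3)+1" using True by presburger
      then have "i div 3 < (n+1) div 3" using \<open>i<n\<close> a1[of "i div 3" n] by linarith
      then show ?thesis using e by blast
    next
      case False
      then have m0: "i mod 3 = 0" using \<open>i mod 3 \<noteq> 2\<close> by presburger
      have e: "i = 3*(i div 3 - 1) + 3 \<and> 1 \<le> i div 3" using a3[OF m0 \<open>1 \<le> i\<close>] .
      have "3*(i div 3) < n" using e \<open>i<n\<close> by linarith
      then have "i div 3 - 1 < n div 3" using a2[of "i div 3" n] e by blast
      then show ?thesis using e by blast
    qed
    then show "i \<in> (\<lambda>j. 3*j+1) ` {..<(n+1) div 3} \<union> (\<lambda>j. 3*j+3) ` {..<n div 3}" by blast
  qed
  have "card S \<le> card ((\<lambda>j. 3*j+1) ` {..<(n+1) div 3} \<union> (\<lambda>j. 3*j+3) ` {..<n div 3})"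
    by (rule card_mono[OF _ sub]) auto
  also have "\<dots> \<le> card ((\<lambda>j. 3*j+1) ` {..<(n+1) div 3}) + card ((\<lambda>j. 3*j+3) ` {..<n div 3})"
    by (rule card_Un_le)
  also have "\<dots> \<le> (n+1) div 3 + n div 3"
    using card_image_le by (metis add_mono card_lessThan finite_lessThan)
  also have "\<dots> \<le> 2*n div 3" using False by presburger
  finally have cS: "card S \<le> 2*n div 3" .
  have l1: "n-1 \<in> S" proof (rule predI)
          show "n \<noteq> 0" using n4 by auto
        next
          fix p assume "n = p + 1" then show "p \<in> S" unfolding S_def mem_Collect_eq using n4 False by presburger
        qed
  have l2: "1 \<in> S" using n4 by (auto simp: S_def)
  have dom: "\<exists>j k. j\<noteq>k \<and> j\<in>S \<and> k\<in>S \<and> (j=i \<or> Q i j) \<and> (k=i \<or> Q i k)" if i: "i<n" for i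
  proof (cases "i = 0")
    case True
    have "Q i (n-1)" using wr sym True by auto
    moreover have "Q i 1" using nx[of 0] n4 True by auto
    ultimately show ?thesis using l1 l2 n4 by (intro exI[of _ "1"] exI[of _ "n-1"]) auto
  next
    case i0: False
    have "i mod 3 = 0 \<or> i mod 3 = 1 \<or> i mod 3 = 2" by presburger
    then consider "i mod 3 = 2" | "i mod 3 = 1" | "i mod 3 = 0" by auto
    then show ?thesis
    proof cases
      case 1
      have a: "i+1 < n" using i 1 False by presburger
      have b1: "i+1 \<in> S" unfolding S_def mem_Collect_eq using a 1 i by presburger
      have b2: "i-1 \<in> S" proof (rule predI)
          show "i \<noteq> 0" using i0 by auto
        next
          fix p assume "i = p + 1" then show "p \<in> S" unfolding S_def mem_Collect_eq using 1 i by presburger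
        qed
      note b = b1 b2
      have "Q i (i-1)" using nx[of "i-1"] sym i0 i by auto
      then show ?thesis using b nx[OF a] 1 by (intro exI[of _ "i+1"] exI[of _ "i-1"]) auto
    next
      case 2
      have iS: "i \<in> S" using 2 i i0 by (auto simp: S_def)
      show ?thesis
      proof (cases "i = 1")
        case True
        have "Q i (n-1)" using ear sym True by auto
        then show ?thesis using iS l1 True n4 by (intro exI[of _ "i"] exI[of _ "n-1"]) auto
      next
        case False
        have b: "i-1 \<in> S" proof (rule predI)
          show "i \<noteq> 0" using i0 by auto
        next
          fix p assume "i = p + 1" then show "p \<in> S" unfolding S_def mem_Collect_eq using 2 i False i0 by presburger
        qed
        have "Q i (i-1)" using nx[of "i-1"] sym i0 i by auto
        then show ?thesis using b iS i0 by (intro exI[of _ "i-1"] exI[of _ i]) auto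
      qed
    next
      case 3
      have iS: "i \<in> S" using 3 i i0 by (auto simp: S_def)
      show ?thesis
      proof (cases "i+1 < n")
        case True
        have b: "i+1 \<in> S" unfolding S_def mem_Collect_eq using 3 True by (presburger+)
        then show ?thesis using iS nx[OF True] by (intro exI[of _ "i+1"] exI[of _ i]) auto
      next
        case False
        then have "i = n-1" using i by auto
        then show ?thesis using iS l2 ear n4 by (intro exI[of _ "1"] exI[of _ i]) auto
      qed
    qed
  qed
  show ?thesis using cS dom by (intro exI[of _ S]) (auto simp: S_def)
qed

lemma rot_inj: "(i::nat) < n \<Longrightarrow> j < n \<Longrightarrow> (i+r) mod n = (j+r) mod n \<Longrightarrow> i = j"
  using cong_add_rcancel_nat[of i r j n] unfolding cong_def by simp

theorem corollary3p3:
  fixes V :: "'a set" and E :: "'a set set"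
  assumes "maximal_outerplanar V E" and "card V \<ge> 3"
  shows "double_domination_number V E \<le> (2 * card V) div 3"
proof -
  from assms(1) have sg: "simple_graph V E" and op: "outerplanar V E"
    and mxm: "\<forall>u\<in>V. \<forall>v\<in>V. u \<noteq> v \<longrightarrow> {u, v} \<notin> E \<longrightarrow> \<not> outerplanar V (insert {u, v} E)"
    by (auto simp: maximal_outerplanar_def)
  define n where "n = card V"
  have n3: "3 \<le> n" using assms(2) n_def by simp
  have finV: "finite V" using sg by (simp add: simple_graph_def)
  have EV: "\<And>a b. {a,b} \<in> E \<Longrightarrow> a \<in> V \<and> b \<in> V" using sg by (auto simp: simple_graph_def)
  from op obtain f where bij: "bij_betw f V {0..<n}"
    and ncf: "\<forall>a b c d. {a,b}\<in>E \<longrightarrow> {c,d}\<in>E \<longrightarrow> \<not>(f a < f c \<and> f c < f b \<and> f b < f d)"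
    unfolding outerplanar_def n_def by blast
  define h where "h = the_inv_into V f"
  have hV: "h i \<in> V \<and> f (h i) = i" if "i<n" for i
    using that bij unfolding h_def
    by (metis atLeastLessThan_iff bij_betw_def f_the_inv_into_f_bij_betw imageI le0 the_inv_into_into order_refl)
  have hf: "h (f v) = v" if "v\<in>V" for v
    using that bij unfolding h_def by (simp add: bij_betw_def the_inv_into_f_f)
  have fV: "f v < n" if "v\<in>V" for v
    using that bij bij_betw_apply by fastforce
  define P where "P i j \<longleftrightarrow> {h i, h j} \<in> E" for i j
  have tri: "tri n P"
  proof
    fix i j assume "P i j" then show "P j i" by (simp add: P_def insert_commute)
  next
    fix i j k l assume "i<j" "j<k" "k<l" "l<n" "P i k" "P j l"
    then show False using ncf hV[of i] hV[of j] hV[of k] hV[of l] unfolding P_def by fastforce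
  next
    fix i j assume ij: "i<j" "j<n" "\<not> P i j"
    show "\<exists>c d. d<n \<and> P c d \<and> i<c \<and> c<j \<and> (d<i \<or> j<d)"
    proof (rule ccontr)
      assume nex: "\<not> (\<exists>c d. d<n \<and> P c d \<and> i<c \<and> c<j \<and> (d<i \<or> j<d))"
      have hi: "h i \<in> V" "f (h i) = i" using hV[of i] ij by auto
      have hj: "h j \<in> V" "f (h j) = j" using hV[of j] ij by auto
      have hij: "h i \<noteq> h j" using hi hj ij by auto
      have key: "f a = i \<and> f b = j" if "{a,b} = {h i, h j}" "f a < f b" for a b
        using that hi hj ij by (auto simp: doubleton_eq_iff)
      have "outerplanar V (insert {h i, h j} E)"
        unfolding outerplanar_def
      proof (intro exI[of _ f] conjI allI impI)
        show "bij_betw f V {0..<card V}" using bij n_def by simp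
      next
        fix a b c d assume ab: "{a,b} \<in> insert {h i,h j} E" and cd: "{c,d} \<in> insert {h i, h j} E"
        show "\<not>(f a < f c \<and> f c < f b \<and> f b < f d)"
        proof
          assume ord: "f a < f c \<and> f c < f b \<and> f b < f d"
          consider (EE) "{a,b}\<in>E" "{c,d}\<in>E" | (NE) "{a,b} = {h i,h j}" "{c,d}\<in>E"
            | (EN) "{a,b}\<in>E" "{c,d}={h i,h j}" | (NN) "{a,b} = {h i,h j}" "{c,d} = {h i,h j}"
            using ab cd by auto
          then show False
          proof cases
            case EE then show False using ncf ord by blast
          next
            case NE
            have fab: "f a = i" "f b = j" using key[OF NE(1)] ord by auto
            have cdV: "c \<in> V" "d \<in> V" using EV NE(2) by auto
            have "P (f c) (f d)" using NE(2) hf cdV by (simp add: P_def)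
            then show False using nex fab ord fV[OF cdV(2)] by auto
          next
            case EN
            have fcd: "f c = i" "f d = j" using key[OF EN(2)] ord by auto
            have abV: "a \<in> V" "b \<in> V" using EV EN(1) by auto
            have "P (f b) (f a)" using EN(1) hf abV by (simp add: P_def insert_commute)
            then show False using nex fcd ord fV[OF abV(1)] by auto
          next
            case NN
            have "f a = i" using key[OF NN(1)] ord by auto
            moreover have "f c = i" using key[OF NN(2)] ord by auto
            ultimately show False using ord by auto
          qed
        qed
      qed
      then show False using mxm hi hj hij ij(3) by (auto simp: P_def)
    qed
  qed
  have cyc: "\<And>x. P (x mod n) ((x+1) mod n)" using tri.cyc[OF tri] n3 by auto
  obtain r where r: "n mod 3 \<noteq> 0 \<longrightarrow> P ((n-1+r) mod n) ((1+r) mod n)"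
  proof (cases "n mod 3 = 0")
    case True then show ?thesis using that[of 0] by simp
  next
    case False
    then have "4 \<le> n" using n3 by presburger
    then obtain e where e: "e+2<n" "P e (e+2)" using tri.ear[OF tri] by blast
    have "(n-1+(e+1)) mod n = e" using e n3 by simp
    moreover have "(1+(e+1)) mod n = e+2" using e by simp
    ultimately show ?thesis using that[of "e+1"] e by simp
  qed
  define \<tau> where "\<tau> i = h ((i+r) mod n)" for i
  define Q where "Q i j \<longleftrightarrow> {\<tau> i, \<tau> j} \<in> E" for i j
  have QP: "Q i j = P ((i+r) mod n) ((j+r) mod n)" for i j by (simp add: Q_def P_def \<tau>_def)
  have "\<exists>S \<subseteq> {..<n}. card S \<le> 2*n div 3 \<and>
          (\<forall>i<n. \<exists>j k. j\<noteq>k \<and> j\<in>S \<and> k\<in>S \<and> (j=i \<or> Q i j) \<and> (k=i \<or> Q i k))"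
  proof (rule dd_comb[OF n3])
    fix i j assume "Q i j" then show "Q j i" by (simp add: Q_def insert_commute)
  next
    fix i assume "i+1<n"
    show "Q i (i+1)" unfolding QP using cyc[of "i+r"] by (simp add: ac_simps)
  next
    have "(n - 1 + r + 1) = n + r" using n3 by simp
    then show "Q (n-1) 0" unfolding QP using cyc[of "n-1+r"] by simp
  next
    assume "n mod 3 \<noteq> 0" then show "Q (n-1) 1" unfolding QP using r by simp
  qed
  then obtain S where S: "S \<subseteq> {..<n}" "card S \<le> 2*n div 3"
    and dom: "\<And>i. i<n \<Longrightarrow> \<exists>j k. j\<noteq>k \<and> j\<in>S \<and> k\<in>S \<and> (j=i \<or> Q i j) \<and> (k=i \<or> Q i k)"
    by blast
  have tV: "\<tau> i \<in> V" for i unfolding \<tau>_def using hV n3 by simp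
  have inj: "inj_on \<tau> {..<n}"
  proof
    fix i j assume ij: "i \<in> {..<n}" "j \<in> {..<n}" "\<tau> i = \<tau> j"
    have "(i+r) mod n = (j+r) mod n"
      using ij(3) hV[of "(i+r) mod n"] hV[of "(j+r) mod n"] n3 unfolding \<tau>_def by (metis mod_less_divisor not_numeral_le_zero neq0_conv)
    then show "i = j" using rot_inj ij by auto
  qed
  have img: "\<tau> ` {..<n} = V"
    using card_subset_eq[OF finV, of "\<tau> ` {..<n}"] tV card_image[OF inj] n_def by auto
  define D where "D = \<tau> ` S"
  have DV: "D \<subseteq> V" using D_def tV by auto
  have cD: "card D = card S" unfolding D_def using card_image inj_on_subset[OF inj S(1)] by blast
  have dd: "double_dominating V E D"
    unfolding double_dominating_def
  proof (intro conjI ballI DV)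
    fix v assume "v \<in> V"
    then obtain i where i: "i<n" "v = \<tau> i" using img by auto
    obtain j k where jk: "j\<noteq>k" "j\<in>S" "k\<in>S" "j=i \<or> Q i j" "k=i \<or> Q i k" using dom[OF i(1)] by blast
    have ne: "\<tau> j \<noteq> \<tau> k" using inj jk S(1) by (meson inj_on_contraD subsetD)
    have "{\<tau> j, \<tau> k} \<subseteq> closed_nbhd E v \<inter> D"
      using jk i unfolding closed_nbhd_def D_def Q_def by (auto simp: insert_commute)
    moreover have "finite (closed_nbhd E v \<inter> D)" using DV finV finite_subset by blast
    ultimately have "card {\<tau> j, \<tau> k} \<le> card (closed_nbhd E v \<inter> D)" by (rule card_mono[rotated])
    then show "2 \<le> card (closed_nbhd E v \<inter> D)" using ne by simp
  qed
  have fin: "finite {card D | D. double_dominating V E D}"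
  proof (rule finite_subset[of _ "{..card V}"])
    show "{card D | D. double_dominating V E D} \<subseteq> {..card V}"
      using card_mono[OF finV] by (auto simp: double_dominating_def)
  qed simp
  have "double_domination_number V E \<le> card D"
    unfolding double_domination_number_def using dd by (intro Min_le[OF fin]) blast
  then show ?thesis using cD S(2) n_def by simp
qed

end
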